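(* Let $k$ be a field of prime characteristic $p$. Define $T$-spaces of $k_0\langle X\rangle$ by $H_1=\{x_1^p\}^S$ and $H_{n+1}=(H_nH_1)^S$ for $n\ge1$. Then for every $m\ge1$, every $u\in H_m$ and every $v\in k_0\langle X\rangle$, $[u,v]=uv-vu\in H_m$.
   Context: $X=\{x_1,x_2,\ldots\}$ is countably infinite; $k_0\langle X\rangle$ is the free associative (non-unital) $k$-algebra on $X$. A $T$-space is a $k$-subspace of $k_0\langle X\rangle$ invariant under every algebra endomorphism of $k_0\langle X\rangle$; $(A)^S$ is the $T$-space generated by a subset $A$. For subsets $A,B$, $AB=\{ab:a\in A,b\in B\}$. *)

theory Defs
  imports Main "HOL-Computational_Algebra.Primes"
begin

text \<open>The free non-unital associative algebra k_0<X> on X = {x_0, x_1, ...}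
  (indexed from 0): elements are finitely supported k-valued functions on words
  (lists of variable indices) vanishing on the empty word.\<close>

definition FA :: "(nat list \<Rightarrow> 'k::field) set" where
  "FA = {f. finite {w. f w \<noteq> 0} \<and> f [] = 0}"

definition fa_zero :: "nat list \<Rightarrow> 'k::field" where
  "fa_zero = (\<lambda>w. 0)"

definition fa_add :: "(nat list \<Rightarrow> 'k::field) \<Rightarrow> (nat list \<Rightarrow> 'k) \<Rightarrow> (nat list \<Rightarrow> 'k)" where
  "fa_add f g = (\<lambda>w. f w + g w)"

definition fa_sub :: "(nat list \<Rightarrow> 'k::field) \<Rightarrow> (nat list \<Rightarrow> 'k) \<Rightarrow> (nat list \<Rightarrow> 'k)" where
  "fa_sub f g = (\<lambda>w. f w - g w)"

definition fa_smult :: "'k::field \<Rightarrow> (nat list \<Rightarrow> 'k) \<Rightarrow> (nat list \<Rightarrow> 'k)" where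
  "fa_smult c f = (\<lambda>w. c * f w)"

definition fa_mult :: "(nat list \<Rightarrow> 'k::field) \<Rightarrow> (nat list \<Rightarrow> 'k) \<Rightarrow> (nat list \<Rightarrow> 'k)" where
  "fa_mult f g = (\<lambda>w. \<Sum>(u, v) \<in> {(u, v). u @ v = w}. f u * g v)"

definition fa_var :: "nat \<Rightarrow> (nat list \<Rightarrow> 'k::field)" where
  "fa_var i = (\<lambda>w. if w = [i] then 1 else 0)"

text \<open>Positive powers (f^0 is not meaningful in a non-unital algebra; set to 0).\<close>
fun fa_pow :: "(nat list \<Rightarrow> 'k::field) \<Rightarrow> nat \<Rightarrow> (nat list \<Rightarrow> 'k)" where
  "fa_pow f 0 = fa_zero"
| "fa_pow f (Suc 0) = f"
| "fa_pow f (Suc (Suc n)) = fa_mult (fa_pow f (Suc n)) f"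

definition fa_endo :: "((nat list \<Rightarrow> 'k::field) \<Rightarrow> (nat list \<Rightarrow> 'k)) \<Rightarrow> bool" where
  "fa_endo \<phi> \<longleftrightarrow> \<phi> ` FA \<subseteq> FA
     \<and> (\<forall>f\<in>FA. \<forall>g\<in>FA. \<phi> (fa_add f g) = fa_add (\<phi> f) (\<phi> g))
     \<and> (\<forall>c. \<forall>f\<in>FA. \<phi> (fa_smult c f) = fa_smult c (\<phi> f))
     \<and> (\<forall>f\<in>FA. \<forall>g\<in>FA. \<phi> (fa_mult f g) = fa_mult (\<phi> f) (\<phi> g))"

definition fa_subspace :: "(nat list \<Rightarrow> 'k::field) set \<Rightarrow> bool" where
  "fa_subspace V \<longleftrightarrow> V \<subseteq> FA \<and> fa_zero \<in> V
     \<and> (\<forall>f\<in>V. \<forall>g\<in>V. fa_add f g \<in> V) \<and> (\<forall>c. \<forall>f\<in>V. fa_smult c f \<in> V)"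

definition T_space :: "(nat list \<Rightarrow> 'k::field) set \<Rightarrow> bool" where
  "T_space V \<longleftrightarrow> fa_subspace V \<and> (\<forall>\<phi>. fa_endo \<phi> \<longrightarrow> \<phi> ` V \<subseteq> V)"

definition T_gen :: "(nat list \<Rightarrow> 'k::field) set \<Rightarrow> (nat list \<Rightarrow> 'k) set" where
  "T_gen A = \<Inter> {V. T_space V \<and> A \<subseteq> V}"

definition set_prod :: "(nat list \<Rightarrow> 'k::field) set \<Rightarrow> (nat list \<Rightarrow> 'k) set \<Rightarrow> (nat list \<Rightarrow> 'k) set" where
  "set_prod A B = {fa_mult a b | a b. a \<in> A \<and> b \<in> B}"

text \<open>H_1 = {x_1^p}^S, H_{n+1} = (H_n H_1)^S; here x_1 is fa_var 0. H 0 is unused.\<close>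
fun H :: "nat \<Rightarrow> (nat list \<Rightarrow> 'k::field) set" where
  "H 0 = {}"
| "H (Suc 0) = T_gen {fa_pow (fa_var 0) CHAR('k)}"
| "H (Suc (Suc n)) = T_gen (set_prod (H (Suc n)) (H (Suc 0)))"

end

theory Submission
  imports Defs "HOL-Library.Poly_Mapping" "HOL-Number_Theory.Number_Theory"
begin


instantiation list :: (type) monoid_add
begin
definition zero_list :: "'a list" where "zero_list = []"
definition plus_list :: "'a list \<Rightarrow> 'a list \<Rightarrow> 'a list" where "plus_list xs ys = xs @ ys"
instance by standard (auto simp: zero_list_def plus_list_def)
end

abbreviation lk where "lk \<equiv> poly_mapping.lookup"
abbreviation ks where "ks \<equiv> Poly_Mapping.keys"

type_synonym 'k R = "nat list \<Rightarrow>\<^sub>0 'k"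

lemma splits_eq: "{(u, v). u @ v = w} = (\<lambda>i. (take i w, drop i w)) ` {..length w}"
proof -
  { fix u v assume "u @ v = w"
    hence "(u,v) \<in> (\<lambda>i. (take i w, drop i w)) ` {..length w}"
      by (intro image_eqI[of _ _ "length u"]) auto }
  thus ?thesis by auto
qed

lemma finite_splits: "finite {(u, v). u @ v = (w::'a list)}"
  unfolding splits_eq by simp

lemma finite_lookup_supp: "finite {a. lk p a \<noteq> 0}"
proof -
  have "{a. lk p a \<noteq> 0} = ks p" by (auto simp: Poly_Mapping.in_keys_iff)
  thus ?thesis by simp
qed

lemma lookup_mult_fa: "lk (p * q) = fa_mult (lk p) (lk (q :: 'k::field R))"
proof
  fix w
  have "lk (p * q) w = (\<Sum>(a, b). lk p a * lk q b when w = a + b)"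
    unfolding times_poly_mapping.rep_eq by (rule prod_fun_unfold_prod) (rule finite_lookup_supp)+
  also have "\<dots> = (\<Sum>(a, b)\<in>{(u, v). u @ v = w}. lk p a * lk q b when w = a + b)"
    by (rule Sum_any.expand_superset) (auto simp: finite_splits plus_list_def)
  also have "\<dots> = fa_mult (lk p) (lk q) w"
    unfolding fa_mult_def by (rule sum.cong) (auto simp: plus_list_def)
  finally show "lk (p * q) w = fa_mult (lk p) (lk q) w" .
qed


lemma sum_single_nz:
  assumes "finite S" "x \<in> S" "\<And>y. y \<in> S \<Longrightarrow> y \<noteq> x \<Longrightarrow> f y = 0"
  shows "sum f S = f x"
proof -
  have "sum f S = f x + sum f (S - {x})" using assms by (simp add: sum.remove)
  also have "sum f (S - {x}) = 0" using assms by (intro sum.neutral) auto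
  finally show ?thesis by simp
qed

definition C :: "'k::field \<Rightarrow> 'k R" where "C c = Poly_Mapping.single 0 c"

lemma lk_C: "lk (C c) w = (if w = [] then c else 0)"
  by (auto simp: C_def lookup_single when_def zero_list_def)

lemma lk_C_mult: "lk (C c * q) w = c * lk q w"
proof -
  have "lk (C c * q) w = fa_mult (lk (C c)) (lk q) w" by (simp add: lookup_mult_fa)
  also have "\<dots> = (\<lambda>(u, v). lk (C c) u * lk q v) ([], w)"
    unfolding fa_mult_def
    by (rule sum_single_nz) (auto simp: finite_splits lk_C split: if_splits)
  finally show ?thesis by (simp add: lk_C)
qed

lemma lk_mult_C: "lk (q * C c) w = lk q w * c"
proof -
  have "lk (q * C c) w = fa_mult (lk q) (lk (C c)) w" by (simp add: lookup_mult_fa)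
  also have "\<dots> = (\<lambda>(u, v). lk q u * lk (C c) v) (w, [])"
    unfolding fa_mult_def
    by (rule sum_single_nz) (auto simp: finite_splits lk_C split: if_splits)
  finally show ?thesis by (simp add: lk_C)
qed

lemma C_central: "C c * q = q * C c"
  by (rule poly_mapping_eqI) (simp add: lk_C_mult lk_mult_C mult.commute)

lemma C_mult: "C a * C b = C (a * b)"
  by (simp add: C_def mult_single zero_list_def plus_list_def)

lemma C_add: "C (a + b) = C a + C b"
  by (simp add: C_def single_add)

lemma C_zero[simp]: "C 0 = 0" by (simp add: C_def)
lemma C_one[simp]: "C 1 = 1" by (simp add: C_def)
lemma C_of_nat: "C (of_nat n) = of_nat n" by (simp add: C_def)
lemma C_uminus: "C (- a) = - C a" by (simp add: C_def single_uminus)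

definition eps :: "'k::field R \<Rightarrow> 'k" where "eps p = lk p []"

lemma eps_mult: "eps (p * q) = eps p * eps q"
proof -
  have "eps (p * q) = fa_mult (lk p) (lk q) []" by (simp add: eps_def lookup_mult_fa)
  also have "\<dots> = (\<lambda>(u, v). lk p u * lk q v) ([], [])"
    unfolding fa_mult_def
    by (rule sum_single_nz) (auto simp: finite_splits)
  finally show ?thesis by (simp add: eps_def)
qed

lemma eps_add: "eps (p + q) = eps p + eps q" by (simp add: eps_def lookup_add)
lemma eps_diff: "eps (p - q) = eps p - eps q" by (simp add: eps_def lookup_minus)
lemma eps_C: "eps (C c) = c" by (simp add: eps_def lk_C)
lemma eps_of_nat: "eps (of_nat n) = of_nat n" by (metis C_of_nat eps_C)
lemma eps_one: "eps 1 = 1" by (metis C_one eps_C)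
lemma eps_power: "eps (p ^ n) = eps p ^ n"
  by (induct n) (simp_all add: eps_one eps_mult)

lemma sum_monomials: "q = (\<Sum>w\<in>ks q. Poly_Mapping.single w (lk q w))"
proof (rule poly_mapping_eqI)
  fix w
  show "lk q w = lk (\<Sum>w\<in>ks q. Poly_Mapping.single w (lk q w)) w"
  proof (cases "w \<in> ks q")
    case True
    have "lk (\<Sum>w\<in>ks q. Poly_Mapping.single w (lk q w)) w
        = (\<Sum>u\<in>ks q. lk (Poly_Mapping.single u (lk q u)) w)" by (simp add: lookup_sum)
    also have "\<dots> = lk (Poly_Mapping.single w (lk q w)) w"
      by (rule sum_single_nz) (auto simp: True lookup_single)
    finally show ?thesis by simp
  next
    case False
    then show ?thesis by (auto simp: lookup_sum lookup_single when_def Poly_Mapping.in_keys_iff intro!: sum.neutral)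
  qed
qed


definition wp :: "(nat \<Rightarrow> 'k::field R) \<Rightarrow> nat list \<Rightarrow> 'k R" where "wp s w = prod_list (map s w)"
definition sub :: "(nat \<Rightarrow> 'k::field R) \<Rightarrow> 'k R \<Rightarrow> 'k R" where
  "sub s q = (\<Sum>w\<in>ks q. C (lk q w) * wp s w)"

lemma wp_append: "wp s (u @ v) = wp s u * wp s v"
  by (simp add: wp_def)

lemma sub_superset:
  assumes "finite A" "ks q \<subseteq> A"
  shows "sub s q = (\<Sum>w\<in>A. C (lk q w) * wp s w)"
  unfolding sub_def
  by (rule sum.mono_neutral_left) (use assms in \<open>auto simp: Poly_Mapping.in_keys_iff\<close>)

lemma sub_add: "sub s (p + q) = sub s p + sub s q"
proof -
  let ?A = "ks p \<union> ks q"
  have "ks (p + q) \<subseteq> ?A" by (rule keys_add)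
  hence "sub s (p + q) = (\<Sum>w\<in>?A. C (lk (p + q) w) * wp s w)" by (intro sub_superset) auto
  also have "\<dots> = (\<Sum>w\<in>?A. C (lk p w) * wp s w) + (\<Sum>w\<in>?A. C (lk q w) * wp s w)"
    by (simp add: lookup_add C_add distrib_right sum.distrib)
  also have "\<dots> = sub s p + sub s q"
    by (simp add: sub_superset[of "ks p \<union> ks q" p s] sub_superset[of "ks p \<union> ks q" q s])
  finally show ?thesis .
qed

lemma sub_zero: "sub s 0 = 0" by (simp add: sub_def)

lemma sub_sum: "sub s (\<Sum>i\<in>I. f i) = (\<Sum>i\<in>I. sub s (f i))"
  by (induct I rule: infinite_finite_induct) (simp_all add: sub_zero sub_add)

lemma sub_single: "sub s (Poly_Mapping.single u c) = C c * wp s u"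
proof -
  have "sub s (Poly_Mapping.single u c) = (\<Sum>w\<in>{u}. C (lk (Poly_Mapping.single u c) w) * wp s w)"
    by (rule sub_superset) auto
  thus ?thesis by simp
qed

lemma sub_mult: "sub s (p * q) = sub s p * sub s q"
proof -
  have "p * q = (\<Sum>u\<in>ks p. Poly_Mapping.single u (lk p u)) * (\<Sum>v\<in>ks q. Poly_Mapping.single v (lk q v))"
    using sum_monomials[of p] sum_monomials[of q] by simp
  also have "\<dots> = (\<Sum>u\<in>ks p. \<Sum>v\<in>ks q. Poly_Mapping.single (u @ v) (lk p u * lk q v))"
    by (simp add: sum_product mult_single plus_list_def)
  finally have pq: "p * q = \<dots>" .
  have "sub s (p * q) = (\<Sum>u\<in>ks p. \<Sum>v\<in>ks q. C (lk p u * lk q v) * wp s (u @ v))"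
    by (simp add: pq sub_sum sub_single)
  also have "\<dots> = (\<Sum>u\<in>ks p. \<Sum>v\<in>ks q. (C (lk p u) * wp s u) * (C (lk q v) * wp s v))"
  proof (intro sum.cong refl)
    fix u v
    have "C (lk p u * lk q v) * wp s (u @ v) = C (lk p u) * (C (lk q v) * wp s u) * wp s v"
      by (simp add: C_mult[symmetric] wp_append mult.assoc)
    also have "\<dots> = C (lk p u) * (wp s u * C (lk q v)) * wp s v"
      by (simp only: C_central[of "lk q v" "wp s u"])
    also have "\<dots> = (C (lk p u) * wp s u) * (C (lk q v) * wp s v)"
      by (simp only: mult.assoc)
    finally show "C (lk p u * lk q v) * wp s (u @ v) = (C (lk p u) * wp s u) * (C (lk q v) * wp s v)" .
  qed
  also have "\<dots> = sub s p * sub s q"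
    by (simp add: sub_def sum_product)
  finally show ?thesis .
qed

lemma sub_C_mult: "sub s (C c * q) = C c * sub s q"
proof -
  have "ks (C c * q) \<subseteq> ks q" by (auto simp: Poly_Mapping.in_keys_iff lk_C_mult)
  hence "sub s (C c * q) = (\<Sum>w\<in>ks q. C (lk (C c * q) w) * wp s w)"
    by (intro sub_superset) auto
  also have "\<dots> = C c * sub s q"
    by (simp add: lk_C_mult sub_def sum_distrib_left C_mult[symmetric] mult.assoc)
  finally show ?thesis .
qed

lemma eps_sum: "eps (\<Sum>i\<in>I. f i) = (\<Sum>i\<in>I. eps (f i))"
  by (simp add: eps_def lookup_sum)

lemma eps_wp: "(\<And>i. eps (s i) = 0) \<Longrightarrow> w \<noteq> [] \<Longrightarrow> eps (wp s w) = 0"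
  by (induct w) (auto simp: wp_def eps_mult)

lemma eps_sub:
  assumes "eps q = 0" "\<And>i. eps (s i) = 0"
  shows "eps (sub s q) = 0"
  unfolding sub_def eps_sum
proof (rule sum.neutral, rule ballI)
  fix w assume "w \<in> ks q"
  show "eps (C (lk q w) * wp s w) = 0"
  proof (cases "w = []")
    case True thus ?thesis using assms by (simp add: eps_mult eps_C eps_def)
  next
    case False thus ?thesis using assms by (simp add: eps_mult eps_wp)
  qed
qed


lemma lk_in_FA: "eps P = 0 \<Longrightarrow> lk (P :: 'k::field R) \<in> FA"
  unfolding FA_def eps_def using finite_lookup_supp[of P] by simp

lemma FA_lk: "f \<in> FA \<Longrightarrow> \<exists>P :: 'k::field R. f = lk P \<and> eps P = 0"
  unfolding FA_def eps_def
  by (rule exI[of _ "Abs_poly_mapping f"]) simp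

lemma fa_add_lk: "fa_add (lk p) (lk q) = lk (p + (q :: 'k::field R))"
  by (simp add: fa_add_def fun_eq_iff lookup_add)
lemma fa_sub_lk: "fa_sub (lk p) (lk q) = lk (p - (q :: 'k::field R))"
  by (simp add: fa_sub_def fun_eq_iff lookup_minus)
lemma fa_smult_lk: "fa_smult c (lk p) = lk (C c * (p :: 'k::field R))"
  by (simp add: fa_smult_def fun_eq_iff lk_C_mult)
lemma fa_mult_lk: "fa_mult (lk p) (lk q) = lk (p * (q :: 'k::field R))"
  by (simp add: lookup_mult_fa)
lemma fa_zero_lk: "fa_zero = lk (0 :: 'k::field R)"
  by (simp add: fa_zero_def fun_eq_iff)
lemma fa_var_lk: "fa_var i = lk (Poly_Mapping.single [i] (1 :: 'k::field))"
  by (simp add: fa_var_def fun_eq_iff lookup_single when_def eq_commute)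
lemma fa_pow_lk: "fa_pow (lk p) (Suc n) = lk (p ^ Suc n :: 'k::field R)"
proof (induct n)
  case 0 thus ?case by simp
next
  case (Suc n)
  have "fa_pow (lk p) (Suc (Suc n)) = fa_mult (fa_pow (lk p) (Suc n)) (lk p)" by simp
  also have "\<dots> = lk (p ^ Suc n * p)" by (simp only: Suc fa_mult_lk)
  also have "p ^ Suc n * p = p ^ Suc (Suc n)" by (rule power_Suc2[symmetric])
  finally show ?case .
qed

definition sa :: "'k::field R \<Rightarrow> nat \<Rightarrow> 'k R" where
  "sa a i = (if i = 0 then a else Poly_Mapping.single [i] 1)"

definition phi :: "'k::field R \<Rightarrow> (nat list \<Rightarrow> 'k) \<Rightarrow> (nat list \<Rightarrow> 'k)" where
  "phi a f = lk (sub (sa a) (Abs_poly_mapping f))"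

lemma eps_sa: "eps a = 0 \<Longrightarrow> eps (sa a i) = 0"
  by (simp add: sa_def eps_def lookup_single when_def)

lemma phi_lk: "phi a (lk P) = lk (sub (sa a) P)"
  by (simp add: phi_def)

lemma phi_endo:
  assumes a: "eps a = 0"
  shows "fa_endo (phi a)"
  unfolding fa_endo_def
proof (intro conjI ballI allI subsetI)
  fix y assume "y \<in> phi a ` FA"
  then obtain f where "f \<in> FA" "y = phi a f" by auto
  then obtain P where "f = lk P" "eps P = 0" using FA_lk by blast
  thus "y \<in> FA" using \<open>y = phi a f\<close> eps_sub[of P "sa a"] eps_sa[OF a]
    by (simp add: phi_lk lk_in_FA)
next
  fix f g :: "nat list \<Rightarrow> 'a" assume "f \<in> FA" "g \<in> FA"
  then obtain P Q where "f = lk P" "g = lk Q" using FA_lk by blast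
  thus "phi a (fa_add f g) = fa_add (phi a f) (phi a g)"
       "phi a (fa_mult f g) = fa_mult (phi a f) (phi a g)"
    by (simp_all add: fa_add_lk fa_mult_lk phi_lk sub_add sub_mult)
next
  fix c and f :: "nat list \<Rightarrow> 'a" assume "f \<in> FA"
  then obtain P where "f = lk P" using FA_lk by blast
  thus "phi a (fa_smult c f) = fa_smult c (phi a f)"
    by (simp add: fa_smult_lk phi_lk sub_C_mult)
qed

lemma sub_power: "sub s (P ^ Suc n) = sub s P ^ Suc n"
  by (induct n) (simp_all add: sub_mult)

lemma phi_pow:
  "phi a (fa_pow (fa_var 0) (Suc n)) = lk (a ^ Suc n)"
proof -
  have "sub (sa a) (Poly_Mapping.single [0] 1) = a"
    by (simp add: sub_single wp_def sa_def)
  thus ?thesis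
    by (simp add: fa_var_lk fa_pow_lk phi_lk sub_power del: power_Suc)
qed



lemma of_nat_mod_CHAR: "of_nat (a mod CHAR('a)) = (of_nat a :: 'a::semiring_1)"
proof -
  have "of_nat a = (of_nat (a mod CHAR('a) + CHAR('a) * (a div CHAR('a))) :: 'a)"
    by simp
  also have "\<dots> = of_nat (a mod CHAR('a))" by (simp only: of_nat_add of_nat_mult of_nat_CHAR) simp
  finally show ?thesis by simp
qed

lemma powsum_zero:
  assumes "prime (CHAR('k::field))" "j + 1 < CHAR('k)"
  shows "(\<Sum>t<CHAR('k). (of_nat t :: 'k) ^ j) = 0"
  using assms(2)
proof (induct j rule: less_induct)
  case (less j)
  define p where "p = CHAR('k)"
  define S where "S i = (\<Sum>t<p. (of_nat t :: 'k) ^ i)" for i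
  have "(\<Sum>t<p. (of_nat (Suc t) :: 'k) ^ Suc j - of_nat t ^ Suc j) = of_nat p ^ Suc j - of_nat 0 ^ Suc j"
    by (rule sum_lessThan_telescope)
  also have "\<dots> = 0" by (simp add: p_def)
  finally have tele: "(\<Sum>t<p. (of_nat (Suc t) :: 'k) ^ Suc j - of_nat t ^ Suc j) = 0" .
  have trm: "(x + 1) ^ Suc j - x ^ Suc j = (\<Sum>i\<le>j. of_nat (Suc j choose i) * x ^ i)" for x :: 'k
  proof -
    have "(x + 1) ^ Suc j = (\<Sum>k\<le>Suc j. of_nat (Suc j choose k) * x ^ k * 1 ^ (Suc j - k))"
      by (rule binomial_ring)
    also have "\<dots> = (\<Sum>k\<le>j. of_nat (Suc j choose k) * x ^ k) + x ^ Suc j"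
      by (simp only: sum.atMost_Suc power_one mult_1_right binomial_n_n of_nat_1 mult_1_left)
    finally show ?thesis by simp
  qed
  have "0 = (\<Sum>t<p. \<Sum>i\<le>j. of_nat (Suc j choose i) * (of_nat t :: 'k) ^ i)"
  proof -
    have os: "of_nat (Suc t) = (of_nat t + 1 :: 'k)" for t by simp
    show ?thesis using tele by (simp only: os trm)
  qed
  also have "\<dots> = (\<Sum>i\<le>j. of_nat (Suc j choose i) * S i)"
    by (simp add: sum.swap[of _ "{..<p}"] S_def sum_distrib_left)
  also have "\<dots> = (\<Sum>i<j. of_nat (Suc j choose i) * S i) + of_nat (Suc j) * S j"
    by (simp add: lessThan_Suc_atMost[symmetric])
  also have "(\<Sum>i<j. of_nat (Suc j choose i) * S i) = 0"
    using less by (intro sum.neutral) (auto simp: S_def p_def)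
  finally have "of_nat (Suc j) * S j = 0" by simp
  moreover have "of_nat (Suc j) \<noteq> (0 :: 'k)"
  proof
    assume "of_nat (Suc j) = (0 :: 'k)"
    hence "CHAR('k) dvd Suc j" by (simp only: of_nat_eq_0_iff_char_dvd)
    hence "CHAR('k) \<le> Suc j" by (rule dvd_imp_le) simp
    thus False using less(2) by simp
  qed
  ultimately show ?case by (simp add: S_def p_def)
qed

lemma key_sums:
  assumes pr: "prime (CHAR('k::field))" and i: "1 \<le> i" "i < CHAR('k)"
  shows "(of_nat (\<Sum>t\<in>{1..<CHAR('k)}. t ^ (CHAR('k) - 2 + i)) :: 'k) = (if i = 1 then -1 else 0)"
proof -
  define p where "p = CHAR('k)"
  have p2: "p \<ge> 2" using pr prime_ge_2_nat p_def by blast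
  have ferm: "(of_nat t :: 'k) ^ (p - 1) = 1" if "t \<in> {1..<p}" for t
  proof -
    have "\<not> p dvd t" using that by (auto dest: dvd_imp_le)
    hence "[t ^ (p - 1) = 1] (mod p)" using pr p_def fermat_theorem by blast
    hence "t ^ (p - 1) mod p = 1 mod p" by (simp add: cong_def)
    hence "(of_nat (t ^ (p - 1) mod CHAR('k)) :: 'k) = of_nat (1 mod CHAR('k))" by (simp add: p_def)
    thus ?thesis by (simp only: of_nat_mod_CHAR) simp
  qed
  have "(of_nat (\<Sum>t\<in>{1..<p}. t ^ (p - 2 + i)) :: 'k) = (\<Sum>t\<in>{1..<p}. (of_nat t :: 'k) ^ (p - 1) * of_nat t ^ (i - 1))"
  proof -
    have e: "p - 2 + i = (p - 1) + (i - 1)" using p2 i by simp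
    show ?thesis by (simp only: e of_nat_sum of_nat_power of_nat_mult power_add)
  qed
  also have "\<dots> = (\<Sum>t\<in>{1..<p}. (of_nat t :: 'k) ^ (i - 1))"
  proof (rule sum.cong[OF refl])
    fix t assume t: "t \<in> {1..<p}"
    show "(of_nat t :: 'k) ^ (p - 1) * of_nat t ^ (i - 1) = of_nat t ^ (i - 1)" using ferm[OF t] by simp
  qed
  also have "\<dots> = (if i = 1 then -1 else 0)"
  proof (cases "i = 1")
    case True
    have "(\<Sum>t\<in>{1..<p}. (of_nat t :: 'k) ^ (i - 1)) = of_nat (p - 1)" using True by simp
    also have "\<dots> = of_nat p - 1" using p2 by (simp add: of_nat_diff)
    finally show ?thesis using True by (simp add: p_def)
  next
    case False
    have "(\<Sum>t<p. (of_nat t :: 'k) ^ (i - 1)) = (\<Sum>t\<in>{1..<p}. (of_nat t :: 'k) ^ (i - 1))"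
      using False i p2 by (intro sum.mono_neutral_right) (auto simp: not_less_eq_eq)
    moreover have "(\<Sum>t<p. (of_nat t :: 'k) ^ (i - 1)) = 0"
      unfolding p_def by (rule powsum_zero[OF pr]) (use i False p_def in auto)
    ultimately show ?thesis using False by simp
  qed
  finally show ?thesis by (simp add: p_def)
qed



fun Pp :: "'a::ring_1 \<Rightarrow> 'a \<Rightarrow> nat \<Rightarrow> nat \<Rightarrow> 'a" where
  "Pp a c 0 i = (if i = 0 then 1 else 0)"
| "Pp a c (Suc n) i = a * Pp a c n i + (if i = 0 then 0 else c * Pp a c n (i - 1))"

lemma Pp_gt: "n < i \<Longrightarrow> Pp a c n i = 0"
  by (induct n arbitrary: i) auto

lemma Pp_0: "Pp a c n 0 = a ^ n"
  by (induct n) auto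

lemma Pp_n: "Pp a c n n = c ^ n"
  by (induct n) (auto simp: Pp_gt)

lemma of_nat_comm: "(of_nat t :: 'a::ring_1) * x = x * of_nat t"
  by (rule mult_of_nat_commute)

lemma Pp_expand: "(a + of_nat t * c) ^ n = (\<Sum>i\<le>n. of_nat (t ^ i) * Pp a c n i)"
proof (induct n)
  case 0 thus ?case by simp
next
  case (Suc n)
  have "(a + of_nat t * c) ^ Suc n = (a + of_nat t * c) * (\<Sum>i\<le>n. of_nat (t ^ i) * Pp a c n i)"
    by (simp add: Suc)
  also have "\<dots> = (\<Sum>i\<le>n. of_nat (t ^ i) * (a * Pp a c n i)) + (\<Sum>i\<le>n. of_nat (t ^ Suc i) * (c * Pp a c n i))"
  proof -
    have t1: "a * (of_nat (t ^ i) * P) = of_nat (t ^ i) * (a * P)" for i P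
      by (metis mult.assoc of_nat_comm)
    have t2: "of_nat t * c * (of_nat (t ^ i) * P) = of_nat (t ^ Suc i) * (c * P)" for i P
    proof -
      have "of_nat t * c * (of_nat (t ^ i) * P) = of_nat t * (c * of_nat (t ^ i)) * P"
        by (simp only: mult.assoc)
      also have "\<dots> = of_nat t * (of_nat (t ^ i) * c) * P" by (simp only: of_nat_comm)
      also have "\<dots> = of_nat (t * t ^ i) * (c * P)" by (simp only: of_nat_mult mult.assoc)
      finally show ?thesis by simp
    qed
    show ?thesis
      by (simp only: distrib_right sum_distrib_left t1 t2 sum.distrib)
  qed
  also have "(\<Sum>i\<le>n. of_nat (t ^ i) * (a * Pp a c n i)) = (\<Sum>i\<le>Suc n. of_nat (t ^ i) * (a * Pp a c n i))"
    by (simp add: Pp_gt)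
  also have "(\<Sum>i\<le>n. of_nat (t ^ Suc i) * (c * Pp a c n i))
      = (\<Sum>i\<le>Suc n. of_nat (t ^ i) * (if i = 0 then 0 else c * Pp a c n (i - 1)))"
    by (simp only: sum.atMost_Suc_shift) simp
  also have "(\<Sum>i\<le>Suc n. of_nat (t ^ i) * (a * Pp a c n i)) + \<dots> = (\<Sum>i\<le>Suc n. of_nat (t ^ i) * Pp a c (Suc n) i)"
    by (simp add: sum.distrib[symmetric] distrib_left)
  finally show ?case .
qed

lemma Pp_comm: "Pp a (v * a - a * v) n (Suc 0) = v * a ^ n - a ^ n * v"
proof (induct n)
  case 0 thus ?case by simp
next
  case (Suc n)
  have "Pp a (v * a - a * v) (Suc n) (Suc 0) = a * (v * a ^ n - a ^ n * v) + (v * a - a * v) * a ^ n"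
    by (simp only: Pp.simps Suc) (simp add: Pp_0)
  also have "\<dots> = v * a ^ Suc n - a ^ Suc n * v"
    by (simp add: algebra_simps)
  finally show ?case .
qed

lemma of_nat_mult_power: "(of_nat t * c :: 'a::ring_1) ^ n = of_nat (t ^ n) * c ^ n"
proof (induct n)
  case 0 thus ?case by simp
next
  case (Suc n)
  have "(of_nat t * c :: 'a) ^ Suc n = of_nat t * c * (of_nat (t ^ n) * c ^ n)" by (simp add: Suc)
  also have "\<dots> = of_nat t * (of_nat (t ^ n) * (c * c ^ n))"
  proof -
    have "c * (of_nat (t ^ n) * c ^ n) = of_nat (t ^ n) * (c * c ^ n)"
      by (metis mult.assoc of_nat_comm)
    thus ?thesis by (simp only: mult.assoc)
  qed
  finally show ?case by (simp add: mult.assoc)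
qed

lemma core_identity:
  fixes a v :: "'a::ring_1"
  assumes p2: "2 \<le> p"
    and H: "\<And>i. 1 \<le> i \<Longrightarrow> i < p \<Longrightarrow> (of_nat (\<Sum>t\<in>{1..<p}. t ^ (p - 2 + i)) :: 'a) = (if i = 1 then -1 else 0)"
  shows "a ^ p * v - v * a ^ p = (\<Sum>t\<in>{1..<p}. of_nat (t ^ (p - 2)) *
            ((a + of_nat t * (v * a - a * v)) ^ p - a ^ p - (of_nat t * (v * a - a * v)) ^ p))"
proof -
  define c where "c = v * a - a * v"
  have split: "{..p} = insert 0 (insert p {1..<p})" using p2 by auto
  have inner: "(a + of_nat t * c) ^ p - a ^ p - (of_nat t * c) ^ p = (\<Sum>i\<in>{1..<p}. of_nat (t ^ i) * Pp a c p i)" for t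
  proof -
    have "(a + of_nat t * c) ^ p = of_nat (t ^ 0) * Pp a c p 0 + (of_nat (t ^ p) * Pp a c p p + (\<Sum>i\<in>{1..<p}. of_nat (t ^ i) * Pp a c p i))"
      unfolding Pp_expand split using p2 by (simp add: sum.insert)
    thus ?thesis by (simp add: Pp_0 Pp_n of_nat_mult_power)
  qed
  have "(\<Sum>t\<in>{1..<p}. of_nat (t ^ (p - 2)) * ((a + of_nat t * c) ^ p - a ^ p - (of_nat t * c) ^ p))
      = (\<Sum>t\<in>{1..<p}. \<Sum>i\<in>{1..<p}. of_nat (t ^ (p - 2 + i)) * Pp a c p i)"
  proof -
    have e: "(of_nat (t ^ (p - 2)) :: 'a) * (of_nat (t ^ i) * P) = of_nat (t ^ (p - 2 + i)) * P" for t i P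
      by (simp only: mult.assoc[symmetric] of_nat_mult[symmetric] power_add[symmetric])
    show ?thesis by (simp only: inner sum_distrib_left e)
  qed
  also have "\<dots> = (\<Sum>i\<in>{1..<p}. \<Sum>t\<in>{1..<p}. of_nat (t ^ (p - 2 + i)) * Pp a c p i)"
    by (rule sum.swap)
  also have "\<dots> = (\<Sum>i\<in>{1..<p}. of_nat (\<Sum>t\<in>{1..<p}. t ^ (p - 2 + i)) * Pp a c p i)"
    by (simp only: of_nat_sum sum_distrib_right)
  also have "\<dots> = (\<Sum>i\<in>{1..<p}. (if i = 1 then -1 else 0) * Pp a c p i)"
  proof (rule sum.cong[OF refl])
    fix i assume "i \<in> {1..<p}"
    hence i1: "1 \<le> i" and i2: "i < p" by auto
    show "of_nat (\<Sum>t\<in>{1..<p}. t ^ (p - 2 + i)) * Pp a c p i = (if i = 1 then -1 else 0) * Pp a c p i"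
      by (simp only: H[OF i1 i2])
  qed
  also have "\<dots> = - Pp a c p 1"
  proof -
    have "(\<lambda>i. (if i = 1 then -1 else 0) * Pp a c p i) = (\<lambda>i. if i = 1 then - Pp a c p i else 0)"
      by auto
    hence "(\<Sum>i\<in>{1..<p}. (if i = 1 then -1 else 0) * Pp a c p i) = (\<Sum>i\<in>{1..<p}. if i = 1 then - Pp a c p i else 0)"
      by (simp only:)
    also have "\<dots> = - Pp a c p 1" using p2 by (subst sum.delta) auto
    finally show ?thesis .
  qed
  also have "\<dots> = a ^ p * v - v * a ^ p"
    by (simp add: c_def Pp_comm)
  finally show ?thesis by (simp add: c_def)
qed



lemma FA_mult_closed: "f \<in> FA \<Longrightarrow> g \<in> FA \<Longrightarrow> fa_mult f g \<in> (FA :: (nat list \<Rightarrow> 'k::field) set)"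
proof -
  assume "f \<in> FA" "g \<in> FA"
  then obtain P Q :: "'k R" where "f = lk P" "eps P = 0" "g = lk Q" "eps Q = 0" using FA_lk by metis
  thus ?thesis by (simp add: fa_mult_lk eps_mult lk_in_FA)
qed

lemma FA_subspace: "fa_subspace (FA :: (nat list \<Rightarrow> 'k::field) set)"
  unfolding fa_subspace_def
proof (intro conjI ballI allI subsetI)
  show "fa_zero \<in> (FA :: (nat list \<Rightarrow> 'k::field) set)"
    by (simp add: fa_zero_lk lk_in_FA eps_def)
next
  fix f g :: "nat list \<Rightarrow> 'k" assume "f \<in> FA" "g \<in> FA"
  then obtain P Q :: "'k R" where "f = lk P" "eps P = 0" "g = lk Q" "eps Q = 0" using FA_lk by metis
  thus "fa_add f g \<in> FA" by (simp add: fa_add_lk eps_add lk_in_FA)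
next
  fix c and f :: "nat list \<Rightarrow> 'k" assume "f \<in> FA"
  then obtain P :: "'k R" where "f = lk P" "eps P = 0" using FA_lk by metis
  thus "fa_smult c f \<in> FA" by (simp add: fa_smult_lk eps_mult eps_C lk_in_FA)
qed simp

lemma T_space_FA: "T_space (FA :: (nat list \<Rightarrow> 'k::field) set)"
  unfolding T_space_def fa_endo_def using FA_subspace by blast

lemma T_gen_least: "T_space W \<Longrightarrow> A \<subseteq> W \<Longrightarrow> T_gen A \<subseteq> W"
  unfolding T_gen_def by blast

lemma T_gen_sup: "A \<subseteq> T_gen A"
  unfolding T_gen_def by blast

lemma T_gen_space:
  assumes "A \<subseteq> (FA :: (nat list \<Rightarrow> 'k::field) set)"
  shows "T_space (T_gen A)"
proof -
  let ?F = "{V. T_space V \<and> A \<subseteq> V}"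
  have ne: "FA \<in> ?F" using assms T_space_FA by blast
  have sub: "T_gen A \<subseteq> FA" using T_gen_least[OF T_space_FA assms] .
  show ?thesis
    unfolding T_space_def fa_subspace_def
  proof (intro conjI ballI allI impI subsetI)
    show "x \<in> T_gen A \<Longrightarrow> x \<in> FA" for x using sub by blast
    show "fa_zero \<in> T_gen A" unfolding T_gen_def by (auto simp: T_space_def fa_subspace_def)
    show "fa_add f g \<in> T_gen A" if "f \<in> T_gen A" "g \<in> T_gen A" for f g
      using that unfolding T_gen_def by (auto simp: T_space_def fa_subspace_def)
    show "fa_smult c f \<in> T_gen A" if "f \<in> T_gen A" for c f
      using that unfolding T_gen_def by (auto simp: T_space_def fa_subspace_def)
    show "y \<in> T_gen A" if "fa_endo \<phi>" "y \<in> \<phi> ` T_gen A" for \<phi> y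
      using that unfolding T_gen_def T_space_def by blast
  qed
qed

lemma endo_zero:
  assumes "fa_endo \<phi>" shows "\<phi> fa_zero = (fa_zero :: nat list \<Rightarrow> 'k::field)"
proof -
  have z: "fa_zero \<in> (FA :: (nat list \<Rightarrow> 'k) set)" using FA_subspace fa_subspace_def by blast
  have "fa_smult 0 g = (fa_zero :: nat list \<Rightarrow> 'k)" for g by (simp add: fa_smult_def fa_zero_def)
  hence "\<phi> fa_zero = \<phi> (fa_smult 0 fa_zero)" by simp
  also have "\<dots> = fa_smult 0 (\<phi> fa_zero)" using assms z unfolding fa_endo_def by blast
  finally show ?thesis by (simp add: fa_smult_def fa_zero_def)
qed

lemma endo_comp: "fa_endo \<phi> \<Longrightarrow> fa_endo \<psi> \<Longrightarrow> fa_endo (\<phi> \<circ> \<psi>)"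
  unfolding fa_endo_def by (auto simp: image_subset_iff)

lemma endo_id: "fa_endo id"
  unfolding fa_endo_def by auto

lemma endo_FA: "fa_endo \<phi> \<Longrightarrow> f \<in> FA \<Longrightarrow> \<phi> f \<in> FA"
  unfolding fa_endo_def by blast

lemma FA_pow: "f \<in> FA \<Longrightarrow> fa_pow f (Suc n) \<in> (FA :: (nat list \<Rightarrow> 'k::field) set)"
  by (induct n) (auto simp: FA_mult_closed)

lemma endo_pow:
  assumes "fa_endo \<phi>" "f \<in> (FA :: (nat list \<Rightarrow> 'k::field) set)"
  shows "\<phi> (fa_pow f (Suc n)) = fa_pow (\<phi> f) (Suc n)"
proof (induct n)
  case 0 thus ?case by simp
next
  case (Suc n)
  have "\<phi> (fa_pow f (Suc (Suc n))) = \<phi> (fa_mult (fa_pow f (Suc n)) f)" by simp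
  also have "\<dots> = fa_mult (\<phi> (fa_pow f (Suc n))) (\<phi> f)"
    using assms FA_pow[OF assms(2)] unfolding fa_endo_def by blast
  finally show ?case using Suc by simp
qed

lemma endo_add: "fa_endo \<phi> \<Longrightarrow> f \<in> FA \<Longrightarrow> g \<in> FA \<Longrightarrow> \<phi> (fa_add f g) = fa_add (\<phi> f) (\<phi> g)"
  unfolding fa_endo_def by blast
lemma endo_smult: "fa_endo \<phi> \<Longrightarrow> f \<in> FA \<Longrightarrow> \<phi> (fa_smult c f) = fa_smult c (\<phi> f)"
  unfolding fa_endo_def by blast
lemma endo_mult: "fa_endo \<phi> \<Longrightarrow> f \<in> FA \<Longrightarrow> g \<in> FA \<Longrightarrow> \<phi> (fa_mult f g) = fa_mult (\<phi> f) (\<phi> g)"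
  unfolding fa_endo_def by blast
lemma subsp_add: "fa_subspace V \<Longrightarrow> f \<in> V \<Longrightarrow> g \<in> V \<Longrightarrow> fa_add f g \<in> V"
  unfolding fa_subspace_def by blast
lemma subsp_smult: "fa_subspace V \<Longrightarrow> f \<in> V \<Longrightarrow> fa_smult c f \<in> V"
  unfolding fa_subspace_def by blast
lemma subsp_zero: "fa_subspace V \<Longrightarrow> fa_zero \<in> V"
  unfolding fa_subspace_def by blast
lemma subsp_FA: "fa_subspace V \<Longrightarrow> f \<in> V \<Longrightarrow> f \<in> FA"
  unfolding fa_subspace_def by blast
lemma Tsp_subsp: "T_space V \<Longrightarrow> fa_subspace V"
  unfolding T_space_def by blast
lemma Tsp_endo: "T_space V \<Longrightarrow> fa_endo \<phi> \<Longrightarrow> f \<in> V \<Longrightarrow> \<phi> f \<in> V"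
  unfolding T_space_def by blast

definition comm :: "(nat list \<Rightarrow> 'k::field) \<Rightarrow> (nat list \<Rightarrow> 'k) \<Rightarrow> (nat list \<Rightarrow> 'k)" where
  "comm f g = fa_sub (fa_mult f g) (fa_mult g f)"

lemma comm_lk: "comm (lk P) (lk Q) = lk (P * Q - Q * (P :: 'k::field R))"
  by (simp add: comm_def fa_mult_lk fa_sub_lk)

lemma comm_add: "f \<in> FA \<Longrightarrow> g \<in> FA \<Longrightarrow> v \<in> FA \<Longrightarrow>
   comm (fa_add f g) v = fa_add (comm f v) (comm g (v :: nat list \<Rightarrow> 'k::field))"
proof -
  assume "f \<in> FA" "g \<in> FA" "v \<in> FA"
  then obtain P Q V :: "'k R" where "f = lk P" "g = lk Q" "v = lk V" using FA_lk by metis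
  thus ?thesis by (simp add: fa_add_lk comm_lk algebra_simps)
qed

lemma comm_smult: "f \<in> FA \<Longrightarrow> v \<in> FA \<Longrightarrow>
   comm (fa_smult c f) v = fa_smult c (comm f (v :: nat list \<Rightarrow> 'k::field))"
proof -
  assume "f \<in> FA" "v \<in> FA"
  then obtain P V :: "'k R" where "f = lk P" "v = lk V" using FA_lk by metis
  moreover have "C c * P * V - V * (C c * P) = C c * (P * V - V * P)"
  proof -
    have "V * (C c * P) = C c * (V * P)" by (metis C_central mult.assoc)
    thus ?thesis by (simp add: mult.assoc right_diff_distrib)
  qed
  ultimately show ?thesis by (simp add: fa_smult_lk comm_lk)
qed

lemma comm_zero: "comm fa_zero (v :: nat list \<Rightarrow> 'k::field) = fa_zero"
  by (simp add: comm_def fa_mult_def fa_zero_def fa_sub_def)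

lemma KL:
  assumes TV: "T_space V" and G: "G \<subseteq> (FA :: (nat list \<Rightarrow> 'k::field) set)"
    and gen: "\<And>\<phi> g v. fa_endo \<phi> \<Longrightarrow> g \<in> G \<Longrightarrow> v \<in> FA \<Longrightarrow> comm (\<phi> g) v \<in> V"
    and u: "u \<in> T_gen G" and v: "v \<in> FA"
  shows "comm u v \<in> V"
proof -
  define W where "W = {u \<in> FA. \<forall>\<phi>. fa_endo \<phi> \<longrightarrow> (\<forall>v\<in>FA. comm (\<phi> u) v \<in> V)}"
  have VS: "fa_subspace V" using TV by (rule Tsp_subsp)
  have TW: "T_space W"
    unfolding T_space_def fa_subspace_def
  proof (intro conjI ballI allI impI subsetI)
    show "x \<in> W \<Longrightarrow> x \<in> FA" for x unfolding W_def by blast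
    show "fa_zero \<in> W"
      unfolding W_def using subsp_zero[OF FA_subspace] subsp_zero[OF VS]
      by (auto simp: endo_zero comm_zero)
    show "fa_add f g \<in> W" if "f \<in> W" "g \<in> W" for f g
    proof -
      have f: "f \<in> FA" "\<And>\<phi> v. fa_endo \<phi> \<Longrightarrow> v \<in> FA \<Longrightarrow> comm (\<phi> f) v \<in> V"
        using that unfolding W_def by auto
      have g: "g \<in> FA" "\<And>\<phi> v. fa_endo \<phi> \<Longrightarrow> v \<in> FA \<Longrightarrow> comm (\<phi> g) v \<in> V"
        using that unfolding W_def by auto
      have "fa_add f g \<in> FA" by (rule subsp_add[OF FA_subspace f(1) g(1)])
      moreover have "comm (\<phi> (fa_add f g)) v \<in> V" if "fa_endo \<phi>" "v \<in> FA" for \<phi> v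
      proof -
        have "\<phi> (fa_add f g) = fa_add (\<phi> f) (\<phi> g)" using that f g by (simp add: endo_add)
        moreover have "comm (fa_add (\<phi> f) (\<phi> g)) v = fa_add (comm (\<phi> f) v) (comm (\<phi> g) v)"
          using that f g by (intro comm_add) (auto simp: endo_FA)
        ultimately show ?thesis using f g that by (simp add: subsp_add[OF VS])
      qed
      ultimately show ?thesis unfolding W_def by blast
    qed
    show "fa_smult c f \<in> W" if "f \<in> W" for c f
    proof -
      have f: "f \<in> FA" "\<And>\<phi> v. fa_endo \<phi> \<Longrightarrow> v \<in> FA \<Longrightarrow> comm (\<phi> f) v \<in> V"
        using that unfolding W_def by auto
      have "fa_smult c f \<in> FA" by (rule subsp_smult[OF FA_subspace f(1)])
      moreover have "comm (\<phi> (fa_smult c f)) v \<in> V" if "fa_endo \<phi>" "v \<in> FA" for \<phi> v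
      proof -
        have "\<phi> (fa_smult c f) = fa_smult c (\<phi> f)" using that f by (simp add: endo_smult)
        moreover have "comm (fa_smult c (\<phi> f)) v = fa_smult c (comm (\<phi> f) v)"
          using that f by (intro comm_smult) (auto simp: endo_FA)
        ultimately show ?thesis using f that by (simp add: subsp_smult[OF VS])
      qed
      ultimately show ?thesis unfolding W_def by blast
    qed
    show "y \<in> W" if psi: "fa_endo \<psi>" and yW: "y \<in> \<psi> ` W" for \<psi> y
    proof -
      obtain f where f: "f \<in> W" "y = \<psi> f" using yW by blast
      have "y \<in> FA" using f psi endo_FA unfolding W_def by blast
      moreover have "comm (\<phi> y) v \<in> V" if "fa_endo \<phi>" "v \<in> FA" for \<phi> v
      proof -
        have "fa_endo (\<phi> \<circ> \<psi>)" using endo_comp that \<open>fa_endo \<psi>\<close> by blast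
        hence "comm ((\<phi> \<circ> \<psi>) f) v \<in> V" using f that unfolding W_def by blast
        thus ?thesis using f by simp
      qed
      ultimately show ?thesis unfolding W_def by blast
    qed
  qed
  have "G \<subseteq> W" unfolding W_def using G gen by blast
  hence "T_gen G \<subseteq> W" by (rule T_gen_least[OF TW])
  hence "u \<in> W" using u by blast
  thus ?thesis using v endo_id unfolding W_def by fastforce
qed



lemma x0_pow_FA: "fa_pow (fa_var 0) n \<in> (FA :: (nat list \<Rightarrow> 'k::field) set)"
proof (cases n)
  case 0 thus ?thesis using subsp_zero[OF FA_subspace] by simp
next
  case (Suc k)
  have "fa_var 0 \<in> (FA :: (nat list \<Rightarrow> 'k::field) set)"
    by (simp add: fa_var_lk lk_in_FA eps_def lookup_single when_def)
  thus ?thesis using Suc FA_pow by blast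
qed

lemma H1_props: "T_space (H (Suc 0) :: (nat list \<Rightarrow> 'k::field) set) \<and> H (Suc 0) \<subseteq> (FA :: (nat list \<Rightarrow> 'k::field) set)"
proof -
  have A: "{fa_pow (fa_var 0) CHAR('k)} \<subseteq> (FA :: (nat list \<Rightarrow> 'k::field) set)" using x0_pow_FA by blast
  show ?thesis using T_gen_space[OF A] T_gen_least[OF T_space_FA A] by simp
qed

lemma H_props: "T_space (H (Suc n) :: (nat list \<Rightarrow> 'k::field) set) \<and> H (Suc n) \<subseteq> (FA :: (nat list \<Rightarrow> 'k::field) set)"
proof (induct n)
  case 0 thus ?case by (rule H1_props)
next
  case (Suc n)
  have A: "set_prod (H (Suc n)) (H (Suc 0)) \<subseteq> (FA :: (nat list \<Rightarrow> 'k::field) set)"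
    using Suc H1_props unfolding set_prod_def by (auto intro!: FA_mult_closed)
  show ?case using T_gen_space[OF A] T_gen_least[OF T_space_FA A] by simp
qed

lemma H1_pow:
  assumes pr: "prime (CHAR('k::field))" and b: "eps (b :: 'k R) = 0"
  shows "lk (b ^ CHAR('k)) \<in> H (Suc 0)"
proof -
  obtain k where k: "CHAR('k) = Suc k" using pr by (metis not0_implies_Suc prime_gt_0_nat neq0_conv)
  have "fa_pow (fa_var 0) CHAR('k) \<in> T_gen {fa_pow (fa_var 0) CHAR('k) :: nat list \<Rightarrow> 'k}"
    using T_gen_sup by blast
  hence "fa_pow (fa_var 0) CHAR('k) \<in> (H (Suc 0) :: (nat list \<Rightarrow> 'k) set)" by simp
  hence "phi b (fa_pow (fa_var 0) CHAR('k)) \<in> H (Suc 0)"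
    using Tsp_endo[OF conjunct1[OF H1_props] phi_endo[OF b]] by blast
  thus ?thesis using phi_pow[of b k] k by simp
qed

lemma subsp_lk_sum:
  assumes "fa_subspace V" "\<And>t. t \<in> I \<Longrightarrow> lk (g t :: 'k::field R) \<in> V"
  shows "lk (\<Sum>t\<in>I. g t) \<in> V"
  using assms(2)
proof (induct I rule: infinite_finite_induct)
  case (infinite A) thus ?case using subsp_zero[OF assms(1)] by (simp add: fa_zero_def)
next
  case empty thus ?case using subsp_zero[OF assms(1)] by (simp add: fa_zero_def)
next
  case (insert x F)
  thus ?case using subsp_add[OF assms(1)] by (simp add: fa_add_lk[symmetric])
qed

lemma subsp_lk_diff:
  assumes "fa_subspace V" "lk (P :: 'k::field R) \<in> V" "lk Q \<in> V"
  shows "lk (P - Q) \<in> V"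
proof -
  have "fa_add (lk P) (fa_smult (-1) (lk Q)) \<in> V"
    using assms by (simp add: subsp_add subsp_smult)
  moreover have "fa_add (lk P) (fa_smult (-1) (lk Q)) = lk (P - Q)"
    by (simp add: fa_smult_lk fa_add_lk C_uminus)
  ultimately show ?thesis by simp
qed

lemma subsp_lk_ofnat:
  assumes "fa_subspace V" "lk (Q :: 'k::field R) \<in> V"
  shows "lk (of_nat n * Q) \<in> V"
proof -
  have "fa_smult (of_nat n) (lk Q) \<in> V" using assms by (simp add: subsp_smult)
  thus ?thesis by (simp add: fa_smult_lk C_of_nat)
qed

lemma core_H1:
  assumes pr: "prime (CHAR('k::field))" and A: "eps (A :: 'k R) = 0" and Q: "eps Q = 0"
  shows "lk (A ^ CHAR('k) * Q - Q * A ^ CHAR('k)) \<in> H (Suc 0)"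
proof -
  define p where "p = CHAR('k)"
  have p2: "2 \<le> p" using pr prime_ge_2_nat p_def by blast
  have HR: "(of_nat (\<Sum>t\<in>{1..<p}. t ^ (p - 2 + i)) :: 'k R) = (if i = 1 then -1 else 0)"
    if "1 \<le> i" "i < p" for i
  proof -
    have "(of_nat (\<Sum>t\<in>{1..<p}. t ^ (p - 2 + i)) :: 'k R) = C (of_nat (\<Sum>t\<in>{1..<p}. t ^ (p - 2 + i)))"
      by (rule C_of_nat[symmetric])
    also have "\<dots> = C (if i = 1 then -1 else 0)" using key_sums[OF pr, of i] that p_def by simp
    finally show ?thesis by (simp add: C_uminus)
  qed
  define c where "c = Q * A - A * Q"
  have VS: "fa_subspace (H (Suc 0) :: (nat list \<Rightarrow> 'k) set)" using H1_props Tsp_subsp by blast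
  have ec: "eps c = 0" using A Q by (simp add: c_def eps_diff eps_mult)
  have "A ^ p * Q - Q * A ^ p = (\<Sum>t\<in>{1..<p}. of_nat (t ^ (p - 2)) *
            ((A + of_nat t * c) ^ p - A ^ p - (of_nat t * c) ^ p))"
    unfolding c_def by (rule core_identity[OF p2 HR])
  also have "lk \<dots> \<in> H (Suc 0)"
  proof (rule subsp_lk_sum[OF VS])
    fix t
    have e1: "eps (A + of_nat t * c) = 0" using A ec by (simp add: eps_add eps_mult)
    have e2: "eps (of_nat t * c) = 0" using ec by (simp add: eps_mult)
    have "lk ((A + of_nat t * c) ^ p - A ^ p - (of_nat t * c) ^ p) \<in> H (Suc 0)"
      using H1_pow[OF pr e1] H1_pow[OF pr A] H1_pow[OF pr e2] unfolding p_def
      by (intro subsp_lk_diff[OF VS]) auto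
    thus "lk (of_nat (t ^ (p - 2)) * ((A + of_nat t * c) ^ p - A ^ p - (of_nat t * c) ^ p)) \<in> H (Suc 0)"
      by (rule subsp_lk_ofnat[OF VS])
  qed
  finally show ?thesis by (simp add: p_def)
qed

lemma C1:
  assumes pr: "prime (CHAR('k::field))"
    and u: "u \<in> (H (Suc 0) :: (nat list \<Rightarrow> 'k) set)" and v: "v \<in> FA"
  shows "comm u v \<in> H (Suc 0)"
proof -
  obtain k where k: "CHAR('k) = Suc k" using pr by (metis not0_implies_Suc prime_gt_0_nat neq0_conv)
  have G: "{fa_pow (fa_var 0) CHAR('k)} \<subseteq> (FA :: (nat list \<Rightarrow> 'k) set)" using x0_pow_FA by blast
  have x0: "fa_var 0 \<in> (FA :: (nat list \<Rightarrow> 'k::field) set)"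
    by (simp add: fa_var_lk lk_in_FA eps_def lookup_single when_def)
  show ?thesis
  proof (rule KL[OF conjunct1[OF H1_props] G _ _ v])
    show "u \<in> T_gen {fa_pow (fa_var 0) CHAR('k)}" using u by simp
  next
    fix \<phi> :: "(nat list \<Rightarrow> 'k) \<Rightarrow> (nat list \<Rightarrow> 'k)" and g w :: "nat list \<Rightarrow> 'k"
    assume phi: "fa_endo \<phi>" and g: "g \<in> {fa_pow (fa_var 0) CHAR('k)}" and w: "w \<in> FA"
    obtain A :: "'k R" where A: "\<phi> (fa_var 0) = lk A" "eps A = 0" using FA_lk endo_FA[OF phi x0] by metis
    obtain Q :: "'k R" where Q: "w = lk Q" "eps Q = 0" using FA_lk w by metis
    have "\<phi> g = lk (A ^ CHAR('k))"
      using g endo_pow[OF phi x0, of k] A k by (simp add: fa_pow_lk del: fa_pow.simps)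
    thus "comm (\<phi> g) w \<in> H (Suc 0)" using core_H1[OF pr A(2) Q(2)] Q by (simp add: comm_lk)
  qed
qed

lemma comm_prod:
  assumes "b \<in> FA" "c \<in> FA" "v \<in> (FA :: (nat list \<Rightarrow> 'k::field) set)"
  shows "comm (fa_mult b c) v = fa_add (fa_mult b (comm c v)) (fa_mult (comm b v) c)"
proof -
  obtain B Cc Q :: "'k R" where "b = lk B" "c = lk Cc" "v = lk Q" using FA_lk assms by metis
  thus ?thesis by (simp add: comm_lk fa_mult_lk fa_add_lk algebra_simps)
qed

lemma Cm:
  assumes pr: "prime (CHAR('k::field))"
  shows "\<forall>u \<in> (H (Suc n) :: (nat list \<Rightarrow> 'k) set). \<forall>v\<in>FA. comm u v \<in> H (Suc n)"
proof (induct n)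
  case 0 thus ?case using C1[OF pr] by blast
next
  case (Suc n)
  let ?G = "set_prod (H (Suc n)) (H (Suc 0)) :: (nat list \<Rightarrow> 'k) set"
  have HS: "T_space (H (Suc n) :: (nat list \<Rightarrow> 'k) set)" "H (Suc n) \<subseteq> (FA :: (nat list \<Rightarrow> 'k) set)"
    using H_props by blast+
  have H1: "T_space (H (Suc 0) :: (nat list \<Rightarrow> 'k) set)" "H (Suc 0) \<subseteq> (FA :: (nat list \<Rightarrow> 'k) set)"
    using H1_props by blast+
  have G: "?G \<subseteq> FA" using HS H1 unfolding set_prod_def by (auto intro!: FA_mult_closed)
  have TS: "T_space (H (Suc (Suc n)) :: (nat list \<Rightarrow> 'k) set)" using H_props by blast
  have VS: "fa_subspace (H (Suc (Suc n)) :: (nat list \<Rightarrow> 'k) set)" using TS Tsp_subsp by blast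
  have GH: "?G \<subseteq> H (Suc (Suc n))" using T_gen_sup by simp
  show ?case
  proof (intro ballI)
    fix u and v :: "nat list \<Rightarrow> 'k" assume u: "u \<in> (H (Suc (Suc n)) :: (nat list \<Rightarrow> 'k) set)" and v: "v \<in> FA"
    show "comm u v \<in> H (Suc (Suc n))"
    proof (rule KL[OF TS G _ _ v])
      show "u \<in> T_gen ?G" using u by simp
    next
      fix \<phi> :: "(nat list \<Rightarrow> 'k) \<Rightarrow> (nat list \<Rightarrow> 'k)" and g w :: "nat list \<Rightarrow> 'k"
      assume phi: "fa_endo \<phi>" and g: "g \<in> ?G" and w: "w \<in> FA"
      obtain b c where bc: "g = fa_mult b c" "b \<in> H (Suc n)" "c \<in> H (Suc 0)"
        using g unfolding set_prod_def by blast
      have bF: "b \<in> FA" "c \<in> FA" using bc HS H1 by blast+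
      have b': "\<phi> b \<in> H (Suc n)" using Tsp_endo[OF HS(1) phi bc(2)] .
      have c': "\<phi> c \<in> H (Suc 0)" using Tsp_endo[OF H1(1) phi bc(3)] .
      have b'F: "\<phi> b \<in> FA" "\<phi> c \<in> FA" using b' c' HS H1 by blast+
      have "\<phi> g = fa_mult (\<phi> b) (\<phi> c)" using endo_mult[OF phi bF] bc by simp
      hence eq: "comm (\<phi> g) w = fa_add (fa_mult (\<phi> b) (comm (\<phi> c) w)) (fa_mult (comm (\<phi> b) w) (\<phi> c))"
        using comm_prod[OF b'F w] by simp
      have "comm (\<phi> c) w \<in> H (Suc 0)" using C1[OF pr c' w] .
      hence m1: "fa_mult (\<phi> b) (comm (\<phi> c) w) \<in> H (Suc (Suc n))"
        using b' GH unfolding set_prod_def by blast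
      have "comm (\<phi> b) w \<in> H (Suc n)" using Suc b' w by blast
      hence m2: "fa_mult (comm (\<phi> b) w) (\<phi> c) \<in> H (Suc (Suc n))"
        using c' GH unfolding set_prod_def by blast
      show "comm (\<phi> g) w \<in> H (Suc (Suc n))" using eq subsp_add[OF VS m1 m2] by simp
    qed
  qed
qed

theorem lemma4p4:
  assumes "prime (CHAR('k::field))"
    and "m \<ge> 1"
    and "(u :: nat list \<Rightarrow> 'k) \<in> H m"
    and "v \<in> FA"
  shows "fa_sub (fa_mult u v) (fa_mult v u) \<in> H m"
proof -
  obtain n where n: "m = Suc n" using assms(2) by (metis Suc_le_D One_nat_def)
  show ?thesis using Cm[OF assms(1), of n] assms(3,4) n unfolding comm_def by blast
qed


end
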